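(* Let $N$ be an oriented subnetwork of $\Gamma(T)$. Let ${\bf t}_i,{\bf t}_{i'},{\bf t}_j,{\bf t}_{j'}\in T$ with ${\bf t}_{i'}=(a,c)$, ${\bf t}_i=(b,d)$, ${\bf t}_{j'}=(e,g)$, ${\bf t}_j=(f,h)$, where $a<b$, $c<d$, $e<f$, $g<h$, so that $R_{i,i'}=[a,b]\times[c,d]$ and $R_{j,j'}=[e,f]\times[g,h]$ both have positive slope. Assume the two rectangles form a crossing configuration in the sense that $[a,b]\subseteq[e,f]$ and $[g,h]\subseteq[c,d]$. Suppose $N$ contains directed Manhattan paths from ${\bf t}_i$ to ${\bf t}_{i'}$, from ${\bf t}_{i'}$ to ${\bf t}_i$, from ${\bf t}_j$ to ${\bf t}_{j'}$ and from ${\bf t}_{j'}$ to ${\bf t}_j$. Then $N$ contains directed Manhattan paths from ${\bf t}_i$ to ${\bf t}_{j'}$, from ${\bf t}_{j'}$ to ${\bf t}_i$, from ${\bf t}_j$ to ${\bf t}_{i'}$ and from ${\bf t}_{i'}$ to ${\bf t}_j$. (The mirror-image statement, obtained by reflecting the plane in a vertical line, holds for rectangles of negative slope.)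
   Context: $T$ is a finite set of points (terminals) in the plane, no two on a common horizontal or vertical line. For points $p,q$, $R(p,q)$ is the smallest closed axis-parallel rectangle containing $p$ and $q$; for ${\bf t}_i,{\bf t}_j\in T$, $R_{i,j}=R({\bf t}_i,{\bf t}_j)$. $\Gamma(T)$ is the grid formed by the horizontal and vertical lines through the terminals, restricted to the bounding box of $T$: its vertices are the intersection points of these lines and its edges are the segments between consecutive vertices on a line. An oriented subnetwork of $\Gamma(T)$ is a set of edges of $\Gamma(T)$, each directed in exactly one sense. A directed Manhattan path from $p$ to $q$ is a directed path in the network whose length equals $|p^x-q^x|+|p^y-q^y|$. A rectangle $R_{i,j}$ has positive slope if $({\bf t}_i^x-{\bf t}_j^x)({\bf t}_i^y-{\bf t}_j^y)>0$ and negative slope otherwise. *)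

theory Defs
  imports Main "HOL-Library.Library"
begin

type_synonym pt = "real \<times> real"

definition general_position :: "pt set \<Rightarrow> bool" where
  "general_position T \<longleftrightarrow>
     (\<forall>p\<in>T. \<forall>q\<in>T. p \<noteq> q \<longrightarrow> fst p \<noteq> fst q \<and> snd p \<noteq> snd q)"

text \<open>Vertices of the grid Gamma(T): intersections of the vertical lines through
  terminals with the horizontal lines through terminals (these automatically lie
  in the bounding box of T).\<close>
definition grid_vertices :: "pt set \<Rightarrow> pt set" where
  "grid_vertices T = {(x, y). x \<in> fst ` T \<and> y \<in> snd ` T}"

definition grid_edge :: "pt set \<Rightarrow> pt \<Rightarrow> pt \<Rightarrow> bool" where
  "grid_edge T u v \<longleftrightarrow>
     u \<in> grid_vertices T \<and> v \<in> grid_vertices T \<and> u \<noteq> v \<and>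
     ((fst u = fst v \<and> \<not> (\<exists>y\<in>snd ` T. min (snd u) (snd v) < y \<and> y < max (snd u) (snd v))) \<or>
      (snd u = snd v \<and> \<not> (\<exists>x\<in>fst ` T. min (fst u) (fst v) < x \<and> x < max (fst u) (fst v))))"

definition oriented_subnetwork :: "pt set \<Rightarrow> (pt \<times> pt) set \<Rightarrow> bool" where
  "oriented_subnetwork T N \<longleftrightarrow>
     (\<forall>(u, v)\<in>N. grid_edge T u v) \<and> (\<forall>u v. (u, v) \<in> N \<longrightarrow> (v, u) \<notin> N)"

definition dist1 :: "pt \<Rightarrow> pt \<Rightarrow> real" where
  "dist1 p q = \<bar>fst p - fst q\<bar> + \<bar>snd p - snd q\<bar>"

text \<open>Length of a polygonal path given by its vertex list (grid edges are
  axis-parallel, so Euclidean length equals dist1).\<close>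
definition path_length :: "pt list \<Rightarrow> real" where
  "path_length vs = sum_list (map (\<lambda>(u, v). dist1 u v) (zip vs (tl vs)))"

definition directed_path :: "(pt \<times> pt) set \<Rightarrow> pt list \<Rightarrow> pt \<Rightarrow> pt \<Rightarrow> bool" where
  "directed_path N vs p q \<longleftrightarrow>
     vs \<noteq> [] \<and> hd vs = p \<and> last vs = q \<and>
     (\<forall>i. Suc i < length vs \<longrightarrow> (vs ! i, vs ! Suc i) \<in> N)"

definition manhattan_path :: "(pt \<times> pt) set \<Rightarrow> pt \<Rightarrow> pt \<Rightarrow> bool" where
  "manhattan_path N p q \<longleftrightarrow>
     (\<exists>vs. directed_path N vs p q \<and> path_length vs = dist1 p q)"

end

theory Submission imports Defs begin

definition dom2 :: "pt \<Rightarrow> pt \<Rightarrow> bool" where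
  "dom2 u v \<longleftrightarrow> fst v \<le> fst u \<and> snd v \<le> snd u"

lemma pl_single[simp]: "path_length [x] = 0"
  by (simp add: path_length_def)

lemma pl_cons[simp]: "path_length (u#v#vs) = dist1 u v + path_length (v#vs)"
  by (simp add: path_length_def)

lemma pl_ge: "vs \<noteq> [] \<Longrightarrow> dist1 (hd vs) (last vs) \<le> path_length vs"
proof (induction vs rule: induct_list012)
  case (3 u v vs)
  then have "dist1 v (last (v#vs)) \<le> path_length (v#vs)" by simp
  then show ?case by (simp add: dist1_def)
qed (auto simp: dist1_def)

lemma tight_dec:
  "vs \<noteq> [] \<Longrightarrow> path_length vs = dist1 (hd vs) (last vs) \<Longrightarrow> dom2 (hd vs) (last vs)
   \<Longrightarrow> successively dom2 vs"
proof (induction vs rule: induct_list012)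
  case (3 u v vs)
  have ge: "dist1 v (last (v#vs)) \<le> path_length (v#vs)" using pl_ge[of "v#vs"] by simp
  define w where "w = last (v#vs)"
  have lw: "last (u#v#vs) = w" by (simp add: w_def)
  have eq: "dist1 u v + path_length (v#vs) = dist1 u w" using 3(4) by (simp only: lw list.sel(1) pl_cons)
  have d: "fst w \<le> fst u" "snd w \<le> snd u" using 3(5) lw by (auto simp: dom2_def)
  have "dom2 u v \<and> dom2 v w \<and> path_length (v#vs) = dist1 v w"
    using eq ge d unfolding dom2_def dist1_def w_def[symmetric] by arith
  then show ?case using 3 by (simp add: w_def)
qed auto

lemma tight_inc:
  "vs \<noteq> [] \<Longrightarrow> path_length vs = dist1 (hd vs) (last vs) \<Longrightarrow> dom2 (last vs) (hd vs)
   \<Longrightarrow> successively (\<lambda>u v. dom2 v u) vs"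
proof (induction vs rule: induct_list012)
  case (3 u v vs)
  have ge: "dist1 v (last (v#vs)) \<le> path_length (v#vs)" using pl_ge[of "v#vs"] by simp
  define w where "w = last (v#vs)"
  have lw: "last (u#v#vs) = w" by (simp add: w_def)
  have eq: "dist1 u v + path_length (v#vs) = dist1 u w" using 3(4) by (simp only: lw list.sel(1) pl_cons)
  have d: "fst u \<le> fst w" "snd u \<le> snd w" using 3(5) lw by (auto simp: dom2_def)
  have "dom2 v u \<and> dom2 w v \<and> path_length (v#vs) = dist1 v w"
    using eq ge d unfolding dom2_def dist1_def w_def[symmetric] by arith
  then show ?case using 3 by (simp add: w_def)
qed auto

lemma dec_len:
  "vs \<noteq> [] \<Longrightarrow> successively dom2 vs \<Longrightarrow> path_length vs = dist1 (hd vs) (last vs) \<and> dom2 (hd vs) (last vs)"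
proof (induction vs rule: induct_list012)
  case (3 u v vs)
  then show ?case by (simp add: dist1_def dom2_def)
qed (auto simp: dist1_def dom2_def)

lemma inc_len:
  "vs \<noteq> [] \<Longrightarrow> successively (\<lambda>u v. dom2 v u) vs \<Longrightarrow> path_length vs = dist1 (hd vs) (last vs) \<and> dom2 (last vs) (hd vs)"
proof (induction vs rule: induct_list012)
  case (3 u v vs)
  then show ?case by (simp add: dist1_def dom2_def)
qed (auto simp: dist1_def dom2_def)

lemma chain_hd: "successively dom2 (x#xs) \<Longrightarrow> y \<in> set xs \<Longrightarrow> dom2 x y"
proof (induction xs arbitrary: x)
  case (Cons z zs)
  have xz: "dom2 x z" and s: "successively dom2 (z#zs)" using Cons(2) by auto
  show ?case
  proof (cases "y = z")
    case True then show ?thesis using xz by simp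
  next
    case False
    then have "dom2 z y" using Cons(1)[OF s] Cons(3) by simp
    then show ?thesis using xz by (auto simp: dom2_def)
  qed
qed simp

lemma dom2_refl[simp]: "dom2 x x" by (simp add: dom2_def)
lemma dom2_trans: "dom2 x y \<Longrightarrow> dom2 y z \<Longrightarrow> dom2 x z" by (auto simp: dom2_def)

lemma chain_total: "successively dom2 P \<Longrightarrow> p \<in> set P \<Longrightarrow> q \<in> set P \<Longrightarrow> dom2 p q \<or> dom2 q p"
proof (induction P)
  case (Cons x xs)
  have s: "successively dom2 xs" using Cons(2) by (cases xs) auto
  have h: "\<And>y. y \<in> set xs \<Longrightarrow> dom2 x y" using chain_hd[OF Cons(2)] by blast
  show ?case
  proof (cases "p = x")
    case True then show ?thesis using Cons(4) h by (cases "q = x") auto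
  next
    case pF: False
    show ?thesis
    proof (cases "q = x")
      case True then show ?thesis using Cons(3) h pF by auto
    next
      case False then show ?thesis using Cons pF s by auto
    qed
  qed
qed simp

lemma chain_hd_all: "successively dom2 P \<Longrightarrow> p \<in> set P \<Longrightarrow> dom2 (hd P) p"
proof (cases P)
  case (Cons x xs)
  assume a: "successively dom2 P" "p \<in> set P"
  show ?thesis using a Cons chain_hd[of x xs p] by (cases "p = x") auto
qed simp

lemma chain_last_all: "successively dom2 P \<Longrightarrow> p \<in> set P \<Longrightarrow> dom2 p (last P)"
proof (induction P)
  case (Cons x xs)
  show ?case
  proof (cases "xs = []")
    case True then show ?thesis using Cons by simp
  next
    case False
    then have l: "last xs \<in> set xs" by simp
    have s: "successively dom2 xs" using Cons(2) by (cases xs) auto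
    have "dom2 x (last xs)" using chain_hd[OF Cons(2) l] .
    then show ?thesis using Cons(1)[OF s] Cons(3) False by (cases "p = x") auto
  qed
qed simp


definition dstep :: "real set \<Rightarrow> real set \<Rightarrow> pt \<Rightarrow> pt \<Rightarrow> bool" where
  "dstep X Y u v \<longleftrightarrow>
    (fst v = fst u \<and> snd v < snd u \<and> \<not>(\<exists>y\<in>Y. snd v < y \<and> y < snd u)) \<or>
    (snd v = snd u \<and> fst v < fst u \<and> \<not>(\<exists>x\<in>X. fst v < x \<and> x < fst u))"

lemma dstep_dom2: "dstep X Y u v \<Longrightarrow> dom2 u v"
  by (auto simp: dstep_def dom2_def)

lemma succ_dstep_dom2: "successively (dstep X Y) P \<Longrightarrow> successively dom2 P"
  by (erule successively_mono) (rule dstep_dom2)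

lemma heights:
  "successively (dstep X Y) P \<Longrightarrow> P \<noteq> [] \<Longrightarrow> y \<in> Y \<Longrightarrow> snd (last P) \<le> y
   \<Longrightarrow> y \<le> snd (hd P) \<Longrightarrow> \<exists>p\<in>set P. snd p = y"
proof (induction P rule: induct_list012)
  case (2 x) then show ?case by auto
next
  case (3 u v vs)
  show ?case
  proof (cases "y = snd u")
    case True then show ?thesis by auto
  next
    case False
    then have yl: "y < snd u" using 3 by simp
    have st: "dstep X Y u v" and s: "successively (dstep X Y) (v#vs)" using 3 by auto
    have "y \<le> snd v" using st yl 3(5) by (auto simp: dstep_def)
    then have "\<exists>p\<in>set (v#vs). snd p = y" using 3 s by simp
    then show ?thesis by auto
  qed
qed simp

definition rightof :: "pt list \<Rightarrow> pt \<Rightarrow> bool" where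
  "rightof P q \<longleftrightarrow> (\<exists>p\<in>set P. snd p = snd q \<and> fst p < fst q)"

lemma cross_step:
  assumes sP: "successively (dstep X Y) P" and gP: "\<forall>p\<in>set P. fst p \<in> X" and ne: "P \<noteq> []"
    and r: "rightof P q" and st: "dstep X Y q q'" and y: "snd q' \<in> Y"
    and lo: "snd (last P) \<le> snd q'" and hi: "snd q' \<le> snd (hd P)"
  shows "q' \<in> set P \<or> rightof P q'"
proof -
  obtain p where p: "p \<in> set P" "snd p = snd q" "fst p < fst q" using r by (auto simp: rightof_def)
  from st show ?thesis unfolding dstep_def
  proof
    assume v: "fst q' = fst q \<and> snd q' < snd q \<and> \<not>(\<exists>y\<in>Y. snd q' < y \<and> y < snd q)"
    obtain p' where p': "p' \<in> set P" "snd p' = snd q'" using heights[OF sP ne y lo hi] by blast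
    have "dom2 p p' \<or> dom2 p' p" using chain_total[OF succ_dstep_dom2[OF sP] p(1) p'(1)] .
    then have "dom2 p p'" using p p' v by (auto simp: dom2_def)
    then have "fst p' < fst q'" using p v by (auto simp: dom2_def)
    then show ?thesis using p' by (auto simp: rightof_def)
  next
    assume hz: "snd q' = snd q \<and> fst q' < fst q \<and> \<not>(\<exists>x\<in>X. fst q' < x \<and> x < fst q)"
    have "fst p \<in> X" using gP p by auto
    then have "fst p \<le> fst q'" using hz p by force
    then show ?thesis
    proof (cases "fst p = fst q'")
      case True
      then have "p = q'" using p hz by (simp add: prod_eq_iff)
      then show ?thesis using p by simp
    next
      case False
      then show ?thesis using p hz \<open>fst p \<le> fst q'\<close> by (auto simp: rightof_def)
    qed
  qed
qed

lemma crossing: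
  assumes sP: "successively (dstep X Y) P" and gP: "\<forall>p\<in>set P. fst p \<in> X" and ne: "P \<noteq> []"
  shows "successively (dstep X Y) Q \<Longrightarrow> Q \<noteq> [] \<Longrightarrow> hd Q \<in> set P \<or> rightof P (hd Q)
    \<Longrightarrow> \<not> rightof P (last Q)
    \<Longrightarrow> \<forall>q\<in>set Q. snd q \<in> Y \<and> snd (last P) \<le> snd q \<and> snd q \<le> snd (hd P)
    \<Longrightarrow> \<exists>z\<in>set Q. z \<in> set P"
proof (induction Q rule: induct_list012)
  case (2 x) then show ?case by auto
next
  case (3 u v vs)
  show ?case
  proof (cases "u \<in> set P")
    case True then show ?thesis by auto
  next
    case False
    then have r: "rightof P u" using 3 by simp
    have st: "dstep X Y u v" and s: "successively (dstep X Y) (v#vs)" using 3 by auto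
    have "v \<in> set P \<or> rightof P v"
      using cross_step[OF sP gP ne r st] 3(7) by simp
    then have "\<exists>z\<in>set (v#vs). z \<in> set P" using 3 s by simp
    then show ?thesis by auto
  qed
qed simp


lemma core:
  assumes sP: "successively (dstep X Y) P" and sQ: "successively (dstep X Y) Q"
    and neP: "P \<noteq> []" and neQ: "Q \<noteq> []"
    and hP: "hd P = (b,d)" and lP: "last P = (a,c)" and hQ: "hd Q = (f,h)" and lQ: "last Q = (e,g)"
    and gP: "\<forall>p\<in>set P. fst p \<in> X" and gQ: "\<forall>q\<in>set Q. snd q \<in> Y"
    and "e \<le> a" "b \<le> f" "c \<le> g" "h \<le> d"
  shows "\<exists>z. z \<in> set P \<and> z \<in> set Q"
proof -
  have dP: "successively dom2 P" and dQ: "successively dom2 Q" using sP sQ by (auto intro: succ_dstep_dom2)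
  have Qb: "\<forall>q\<in>set Q. g \<le> snd q \<and> snd q \<le> h"
    using chain_hd_all[OF dQ] chain_last_all[OF dQ] hQ lQ by (auto simp: dom2_def)
  have Pb: "\<forall>p\<in>set P. a \<le> fst p \<and> fst p \<le> b"
    using chain_hd_all[OF dP] chain_last_all[OF dP] hP lP by (auto simp: dom2_def)
  have hQin: "hd Q \<in> set Q" using neQ by simp
  have hY: "h \<in> Y" using gQ hQin hQ by force
  have "g \<le> h" using Qb hQin hQ by force
  obtain p where p: "p \<in> set P" "snd p = h"
    using heights[OF sP neP hY] lP hP \<open>g \<le> h\<close> assms by auto
  have start: "hd Q \<in> set P \<or> rightof P (hd Q)"
  proof (cases "fst p < f")
    case True then show ?thesis using p hQ by (auto simp: rightof_def)
  next
    case False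
    then have "p = hd Q" using p Pb hQ assms by (auto simp: prod_eq_iff)
    then show ?thesis using p by simp
  qed
  have fin: "\<not> rightof P (last Q)" using Pb lQ assms by (auto simp: rightof_def)
  have "\<forall>q\<in>set Q. snd q \<in> Y \<and> snd (last P) \<le> snd q \<and> snd q \<le> snd (hd P)"
    using gQ Qb hP lP assms by force
  then show ?thesis using crossing[OF sP gP neP sQ neQ start fin] by blast
qed

lemma splice:
  assumes "successively R (A@z#B)" "successively R (C@z#D)"
  shows "successively R (A@z#D)"
  using assms by (auto simp: successively_append_iff)

lemma mk_path:
  assumes len: "\<And>L. L \<noteq> [] \<Longrightarrow> successively Rm L \<Longrightarrow> path_length L = dist1 (hd L) (last L)"
    and e1: "successively (\<lambda>u v. (u,v)\<in>N) L1" and m1: "successively Rm L1" and h1: "hd L1 = p"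
    and e2: "successively (\<lambda>u v. (u,v)\<in>N) L2" and m2: "successively Rm L2" and l2: "last L2 = q"
    and z1: "z \<in> set L1" and z2: "z \<in> set L2"
  shows "manhattan_path N p q"
proof -
  obtain A B where 1: "L1 = A@z#B" using z1 by (meson split_list)
  obtain C D where 2: "L2 = C@z#D" using z2 by (meson split_list)
  define L where "L = A@z#D"
  have eL: "successively (\<lambda>u v. (u,v)\<in>N) L" using splice e1 e2 1 2 L_def by metis
  have mL: "successively Rm L" using splice m1 m2 1 2 L_def by metis
  have hL: "hd L = p" using h1 1 L_def by (cases A) auto
  have lL: "last L = q" using l2 2 L_def by (cases D) auto
  have ne: "L \<noteq> []" using L_def by simp
  have "directed_path N L p q" using eL hL lL ne
    by (simp add: directed_path_def successively_conv_nth)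
  moreover have "path_length L = dist1 p q" using len[OF ne mL] hL lL by simp
  ultimately show ?thesis by (auto simp: manhattan_path_def)
qed


lemma mp_extract:
  assumes os: "oriented_subnetwork T N" and mp: "manhattan_path N p q" and pT: "p \<in> T"
  shows "\<exists>vs. vs \<noteq> [] \<and> hd vs = p \<and> last vs = q \<and> successively (\<lambda>u v. (u,v)\<in>N) vs
     \<and> path_length vs = dist1 p q \<and> (\<forall>v\<in>set vs. v \<in> grid_vertices T)"
proof -
  obtain vs where vs: "directed_path N vs p q" "path_length vs = dist1 p q"
    using mp by (auto simp: manhattan_path_def)
  have ne: "vs \<noteq> []" and h: "hd vs = p" and l: "last vs = q"
    and e: "\<And>i. Suc i < length vs \<Longrightarrow> (vs!i, vs!Suc i) \<in> N"
    using vs(1) by (auto simp: directed_path_def)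
  have g: "\<forall>v\<in>set vs. v \<in> grid_vertices T"
  proof
    fix v assume "v \<in> set vs"
    then obtain i where i: "i < length vs" "v = vs!i" by (auto simp: in_set_conv_nth)
    show "v \<in> grid_vertices T"
    proof (cases i)
      case 0
      then have "v = p" using i h ne by (simp add: hd_conv_nth)
      then show ?thesis using pT by (auto simp: grid_vertices_def mem_Times_iff)
    next
      case (Suc j)
      then have "(vs!j, v) \<in> N" using e i by simp
      then have "grid_edge T (vs!j) v" using os by (auto simp: oriented_subnetwork_def)
      then show ?thesis by (simp add: grid_edge_def)
    qed
  qed
  show ?thesis using ne h l e g vs(2) by (auto simp: successively_conv_nth)
qed

lemma edge_dstep:
  assumes "grid_edge T u v" "dom2 u v" shows "dstep (fst`T) (snd`T) u v"
proof -
  have "u \<noteq> v" using assms(1) by (simp add: grid_edge_def)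
  then show ?thesis using assms unfolding grid_edge_def dstep_def dom2_def
    by (auto simp: prod_eq_iff min_def max_def split: if_splits)
qed

lemma succ_conj: "successively R xs \<Longrightarrow> successively S xs \<Longrightarrow> successively (\<lambda>u v. R u v \<and> S u v) xs"
  by (auto simp: successively_conv_nth)

lemma path_dec:
  assumes os: "oriented_subnetwork T N" and mp: "manhattan_path N p q" and pT: "p \<in> T"
    and d: "dom2 p q"
  shows "\<exists>vs. vs \<noteq> [] \<and> hd vs = p \<and> last vs = q \<and> successively (\<lambda>u v. (u,v)\<in>N) vs
     \<and> successively dom2 vs \<and> successively (dstep (fst`T) (snd`T)) vs \<and> (\<forall>v\<in>set vs. fst v \<in> fst`T \<and> snd v \<in> snd`T)"
proof -
  obtain vs where vs: "vs \<noteq> []" "hd vs = p" "last vs = q" "successively (\<lambda>u v. (u,v)\<in>N) vs"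
     "path_length vs = dist1 p q" "\<forall>v\<in>set vs. v \<in> grid_vertices T"
    using mp_extract[OF os mp pT] by blast
  have m: "successively dom2 vs" using tight_dec[of vs] vs d by simp
  have "successively (\<lambda>u v. (u,v)\<in>N \<and> dom2 u v) vs" using succ_conj[OF vs(4) m] .
  then have "successively (dstep (fst`T) (snd`T)) vs"
    by (rule successively_mono) (use os edge_dstep in \<open>auto simp: oriented_subnetwork_def\<close>)
  moreover have "\<forall>v\<in>set vs. fst v \<in> fst`T \<and> snd v \<in> snd`T" using vs(6) by (auto simp: grid_vertices_def)
  ultimately show ?thesis using vs m by blast
qed

lemma path_inc:
  assumes os: "oriented_subnetwork T N" and mp: "manhattan_path N p q" and pT: "p \<in> T"
    and d: "dom2 q p"
  shows "\<exists>vs. vs \<noteq> [] \<and> hd vs = p \<and> last vs = q \<and> successively (\<lambda>u v. (u,v)\<in>N) vs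
     \<and> successively (\<lambda>u v. dom2 v u) vs \<and> successively (dstep (fst`T) (snd`T)) (rev vs) \<and> (\<forall>v\<in>set vs. fst v \<in> fst`T \<and> snd v \<in> snd`T)"
proof -
  obtain vs where vs: "vs \<noteq> []" "hd vs = p" "last vs = q" "successively (\<lambda>u v. (u,v)\<in>N) vs"
     "path_length vs = dist1 p q" "\<forall>v\<in>set vs. v \<in> grid_vertices T"
    using mp_extract[OF os mp pT] by blast
  have m: "successively (\<lambda>u v. dom2 v u) vs" using tight_inc[of vs] vs d by simp
  have "successively (\<lambda>u v. (u,v)\<in>N \<and> dom2 v u) vs" using succ_conj[OF vs(4) m] .
  then have "successively (\<lambda>u v. dstep (fst`T) (snd`T) v u) vs"
  proof (rule successively_mono)
    fix u v assume "(u,v)\<in>N \<and> dom2 v u"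
    then have "grid_edge T u v" "dom2 v u" using os by (auto simp: oriented_subnetwork_def)
    then have "grid_edge T v u" by (auto simp: grid_edge_def min_def max_def)
    then show "dstep (fst`T) (snd`T) v u" using edge_dstep \<open>dom2 v u\<close> by blast
  qed
  then have "successively (dstep (fst`T) (snd`T)) (rev vs)" by simp
  moreover have "\<forall>v\<in>set vs. fst v \<in> fst`T \<and> snd v \<in> snd`T" using vs(6) by (auto simp: grid_vertices_def)
  ultimately show ?thesis using vs m by blast
qed

theorem lemma3p1:
  fixes T :: "pt set" and N :: "(pt \<times> pt) set"
    and ti ti' tj tj' :: pt and a b c d e f g h :: real
  assumes "finite T" and "general_position T"
    and "oriented_subnetwork T N"
    and "ti \<in> T" "ti' \<in> T" "tj \<in> T" "tj' \<in> T"
    and "ti' = (a, c)" "ti = (b, d)" "tj' = (e, g)" "tj = (f, h)"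
    and "a < b" "c < d" "e < f" "g < h"
    and "e \<le> a" "b \<le> f" "c \<le> g" "h \<le> d"
    and "manhattan_path N ti ti'" "manhattan_path N ti' ti"
    and "manhattan_path N tj tj'" "manhattan_path N tj' tj"
  shows "manhattan_path N ti tj' \<and> manhattan_path N tj' ti \<and>
         manhattan_path N tj ti' \<and> manhattan_path N ti' tj"
proof -
  note os = assms(3)
  obtain P where P: "P \<noteq> []" "hd P = ti" "last P = ti'" "successively (\<lambda>u v. (u,v)\<in>N) P"
     "successively dom2 P" "successively (dstep (fst`T) (snd`T)) P" "\<forall>v\<in>set P. fst v \<in> fst`T \<and> snd v \<in> snd`T"
    using path_dec[OF os assms(20) assms(4)] assms by (auto simp: dom2_def)
  obtain Q where Q: "Q \<noteq> []" "hd Q = tj" "last Q = tj'" "successively (\<lambda>u v. (u,v)\<in>N) Q"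
     "successively dom2 Q" "successively (dstep (fst`T) (snd`T)) Q" "\<forall>v\<in>set Q. fst v \<in> fst`T \<and> snd v \<in> snd`T"
    using path_dec[OF os assms(22) assms(6)] assms by (auto simp: dom2_def)
  obtain P' where P': "P' \<noteq> []" "hd P' = ti'" "last P' = ti" "successively (\<lambda>u v. (u,v)\<in>N) P'"
     "successively (\<lambda>u v. dom2 v u) P'" "successively (dstep (fst`T) (snd`T)) (rev P')" "\<forall>v\<in>set P'. fst v \<in> fst`T \<and> snd v \<in> snd`T"
    using path_inc[OF os assms(21) assms(5)] assms by (auto simp: dom2_def)
  obtain Q' where Q': "Q' \<noteq> []" "hd Q' = tj'" "last Q' = tj" "successively (\<lambda>u v. (u,v)\<in>N) Q'"
     "successively (\<lambda>u v. dom2 v u) Q'" "successively (dstep (fst`T) (snd`T)) (rev Q')" "\<forall>v\<in>set Q'. fst v \<in> fst`T \<and> snd v \<in> snd`T"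
    using path_inc[OF os assms(23) assms(7)] assms by (auto simp: dom2_def)
  obtain z where z: "z \<in> set P" "z \<in> set Q"
    using core[OF P(6) Q(6) P(1) Q(1), of b d a c f h e g] P Q assms by auto
  obtain z' where z': "z' \<in> set (rev P')" "z' \<in> set (rev Q')"
    using core[OF P'(6) Q'(6), of b d a c f h e g] P' Q' assms by (auto simp: hd_rev last_rev)
  have lenD: "\<And>L. L \<noteq> [] \<Longrightarrow> successively dom2 L \<Longrightarrow> path_length L = dist1 (hd L) (last L)"
    using dec_len by blast
  have lenI: "\<And>L. L \<noteq> [] \<Longrightarrow> successively (\<lambda>u v. dom2 v u) L \<Longrightarrow> path_length L = dist1 (hd L) (last L)"
    using inc_len by blast
  have 1: "manhattan_path N ti tj'" using mk_path[OF lenD P(4) P(5) P(2) Q(4) Q(5) Q(3) z] .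
  have 3: "manhattan_path N tj ti'" using mk_path[OF lenD Q(4) Q(5) Q(2) P(4) P(5) P(3) z(2) z(1)] .
  have 2: "manhattan_path N tj' ti" using mk_path[OF lenI Q'(4) Q'(5) Q'(2) P'(4) P'(5) P'(3)] z' by simp
  have 4: "manhattan_path N ti' tj" using mk_path[OF lenI P'(4) P'(5) P'(2) Q'(4) Q'(5) Q'(3)] z' by simp
  show ?thesis using 1 2 3 4 by blast
qed

end
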